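(* Let $S$ be a $1$-synchronizable system. Let $a_1,\dots,a_n,b_1,\dots,b_m\in\Sigma_M$ and $\tau\in T_0(S)$ be such that $\tau\cdot !a_1\cdots !a_n\in T_n(S)$, $\tau\cdot !b_1\cdots !b_m\in T_m(S)$, and $\mathrm{src}(a_i)\neq\mathrm{src}(b_j)$ for all $i\in\{1,\dots,n\}$, $j\in\{1,\dots,m\}$. Then for any two different shuffles $\xi_1,\xi_2$ of the action sequence $!?a_1\cdots !?a_n$ with the action sequence $!?b_1\cdots !?b_m$, it holds that $\tau\cdot\xi_1\in T_\omega(S)$, $\tau\cdot\xi_2\in T_\omega(S)$, and $\tau\cdot\xi_1\equiv_S\tau\cdot\xi_2$.
   Context: A message set $M=(\Sigma_M,N,\mathrm{src},\mathrm{dst})$: finite set of messages, $N\ge1$ peers, $\mathrm{src}(a)\neq\mathrm{dst}(a)\in\{1,\dots,N\}$. Actions $!a$ (by peer $\mathrm{src}(a)$), $?a$ (by peer $\mathrm{dst}(a)$); traces are finite action sequences; $!?a$ abbreviates $!a\cdot?a$. For a trace $\tau$, $\pi_!(\tau)$ is the sequence of sent messages; $\mathrm{buf}_{i\to j}(\tau)$ is the word $w$ (if any) with (sent on $i\to j$) $=$ (received on $i\to j$)$\cdot w$. $\tau$ is FIFO ($k$-bounded FIFO) if for all $i,j$ and prefixes $\tau'$, $\mathrm{buf}_{i\to j}(\tau')$ is defined (and has length $\le k$); synchronous if of the form $!?a_1\cdots!?a_k$. A system $S=(P_1,\dots,P_N)$: finite automata $P_i$ (all states accepting) over actions of peer $i$,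 with one FIFO channel per ordered pair $i\neq j$. A configuration: one control state per peer and contents $w_{i,j}$ of channels; stable if all channels empty. $!a$ ($\mathrm{src}(a)=i,\mathrm{dst}(a)=j$) moves $P_i$ and appends $a$ to $w_{i,j}$; $?a$ moves $P_j$ and removes $a$ from the head of $w_{i,j}$; $c_0$ is the initial configuration. $T_k(S)$ ($k\ge1$): $k$-bounded FIFO traces $\tau$ with $c_0\xrightarrow{\tau}c$ for some $c$; $T_0(S)$: synchronous such traces; $T_\omega(S)=\bigcup_kT_k(S)$. $\tau_1\equiv_S\tau_2$ iff $\tau_1,\tau_2\in T_\omega(S)$ and there is $c$ with $c_0\xrightarrow{\tau_1}c$ and $c_0\xrightarrow{\tau_2}c$. $ST_k(S)=\{\pi_!(\tau)\mid\tau\in T_k(S)\}\cup\{(\pi_!(\tau),c)\mid c_0\xrightarrow{\tau}c,\ c\text{ stable},\ \tau\in T_k(S)\}$; $S$ is $1$-synchronizable if $ST_0(S)=ST_1(S)$. *)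

theory Defs
  imports Main "HOL-Library.Sublist"
begin

datatype 'm action = Send 'm | Recv 'm

text \<open>A system bundles the message set M = (Sigma_M, N, src, dst) together with
  the peers P_1..P_N (finite automata, all states accepting, so only states,
  initial state and transitions are recorded).\<close>

record ('m, 's) sys =
  msgs   :: "'m set"
  npeers :: nat
  src    :: "'m \<Rightarrow> nat"
  dst    :: "'m \<Rightarrow> nat"
  states :: "nat \<Rightarrow> 's set"
  init   :: "nat \<Rightarrow> 's"
  trans  :: "nat \<Rightarrow> ('s \<times> 'm action \<times> 's) set"

definition peer_of :: "('m, 's) sys \<Rightarrow> 'm action \<Rightarrow> nat" where
  "peer_of S act = (case act of Send a \<Rightarrow> src S a | Recv a \<Rightarrow> dst S a)"

definition msg_of :: "'m action \<Rightarrow> 'm" where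
  "msg_of act = (case act of Send a \<Rightarrow> a | Recv a \<Rightarrow> a)"

definition wf_sys :: "('m, 's) sys \<Rightarrow> bool" where
  "wf_sys S \<longleftrightarrow>
     npeers S \<ge> 1 \<and> finite (msgs S) \<and>
     (\<forall>a\<in>msgs S. src S a \<in> {1..npeers S} \<and> dst S a \<in> {1..npeers S} \<and> src S a \<noteq> dst S a) \<and>
     (\<forall>i\<in>{1..npeers S}. finite (states S i) \<and> init S i \<in> states S i \<and>
        (\<forall>(q, act, q') \<in> trans S i. q \<in> states S i \<and> q' \<in> states S i \<and>
            msg_of act \<in> msgs S \<and> peer_of S act = i))"

text \<open>Configurations: control state of each peer, and content w i j of channel i -> j.\<close>
type_synonym ('m, 's) config = "(nat \<Rightarrow> 's) \<times> (nat \<Rightarrow> nat \<Rightarrow> 'm list)"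

definition c0 :: "('m, 's) sys \<Rightarrow> ('m, 's) config" where
  "c0 S = (init S, \<lambda>i j. [])"

definition stable :: "('m, 's) config \<Rightarrow> bool" where
  "stable c \<longleftrightarrow> (\<forall>i j. snd c i j = [])"

inductive step :: "('m, 's) sys \<Rightarrow> ('m, 's) config \<Rightarrow> 'm action \<Rightarrow> ('m, 's) config \<Rightarrow> bool"
  for S where
  send: "\<lbrakk> a \<in> msgs S; i = src S a; j = dst S a; (q i, Send a, p) \<in> trans S i \<rbrakk>
         \<Longrightarrow> step S (q, w) (Send a) (q(i := p), w(i := (w i)(j := w i j @ [a])))"
| recv: "\<lbrakk> a \<in> msgs S; i = src S a; j = dst S a; w i j = a # rest; (q j, Recv a, p) \<in> trans S j \<rbrakk>
         \<Longrightarrow> step S (q, w) (Recv a) (q(j := p), w(i := (w i)(j := rest)))"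

inductive run :: "('m, 's) sys \<Rightarrow> ('m, 's) config \<Rightarrow> 'm action list \<Rightarrow> ('m, 's) config \<Rightarrow> bool"
  for S where
  nil:  "run S c [] c"
| cons: "\<lbrakk> step S c act c'; run S c' tau c'' \<rbrakk> \<Longrightarrow> run S c (act # tau) c''"

definition sends :: "'m action list \<Rightarrow> 'm list" where
  "sends tau = concat (map (\<lambda>act. case act of Send a \<Rightarrow> [a] | Recv a \<Rightarrow> []) tau)"

definition recvs :: "'m action list \<Rightarrow> 'm list" where
  "recvs tau = concat (map (\<lambda>act. case act of Send a \<Rightarrow> [] | Recv a \<Rightarrow> [a]) tau)"

definition sent_on :: "('m, 's) sys \<Rightarrow> nat \<Rightarrow> nat \<Rightarrow> 'm action list \<Rightarrow> 'm list" where
  "sent_on S i j tau = filter (\<lambda>a. src S a = i \<and> dst S a = j) (sends tau)"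

definition recv_on :: "('m, 's) sys \<Rightarrow> nat \<Rightarrow> nat \<Rightarrow> 'm action list \<Rightarrow> 'm list" where
  "recv_on S i j tau = filter (\<lambda>a. src S a = i \<and> dst S a = j) (recvs tau)"

definition buf :: "('m, 's) sys \<Rightarrow> nat \<Rightarrow> nat \<Rightarrow> 'm action list \<Rightarrow> 'm list option" where
  "buf S i j tau =
     (if prefix (recv_on S i j tau) (sent_on S i j tau)
      then Some (drop (length (recv_on S i j tau)) (sent_on S i j tau)) else None)"

definition kfifo :: "('m, 's) sys \<Rightarrow> nat \<Rightarrow> 'm action list \<Rightarrow> bool" where
  "kfifo S k tau \<longleftrightarrow>
     (\<forall>tau'. prefix tau' tau \<longrightarrow>
        (\<forall>i\<in>{1..npeers S}. \<forall>j\<in>{1..npeers S}. i \<noteq> j \<longrightarrow>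
           (\<exists>w. buf S i j tau' = Some w \<and> length w \<le> k)))"

text \<open>!?a abbreviates !a . ?a\<close>
definition sync_word :: "'m list \<Rightarrow> 'm action list" where
  "sync_word as = concat (map (\<lambda>a. [Send a, Recv a]) as)"

definition synchronous :: "'m action list \<Rightarrow> bool" where
  "synchronous tau \<longleftrightarrow> (\<exists>as. tau = sync_word as)"

definition T :: "('m, 's) sys \<Rightarrow> nat \<Rightarrow> 'm action list set" where
  "T S k = (if k = 0 then {tau. synchronous tau \<and> (\<exists>c. run S (c0 S) tau c)}
            else {tau. kfifo S k tau \<and> (\<exists>c. run S (c0 S) tau c)})"

definition T_omega :: "('m, 's) sys \<Rightarrow> 'm action list set" where
  "T_omega S = (\<Union>k. T S k)"

definition trace_equiv :: "('m, 's) sys \<Rightarrow> 'm action list \<Rightarrow> 'm action list \<Rightarrow> bool" where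
  "trace_equiv S t1 t2 \<longleftrightarrow> t1 \<in> T_omega S \<and> t2 \<in> T_omega S \<and>
      (\<exists>c. run S (c0 S) t1 c \<and> run S (c0 S) t2 c)"

text \<open>ST_k(S): send projections of T_k traces (Inl), plus pairs of send projection and
  reached stable configuration (Inr).\<close>
definition ST :: "('m, 's) sys \<Rightarrow> nat \<Rightarrow> ('m list + ('m list \<times> ('m, 's) config)) set" where
  "ST S k = {Inl (sends tau) | tau. tau \<in> T S k}
          \<union> {Inr (sends tau, c) | tau c. run S (c0 S) tau c \<and> stable c \<and> tau \<in> T S k}"

definition one_synchronizable :: "('m, 's) sys \<Rightarrow> bool" where
  "one_synchronizable S \<longleftrightarrow> ST S 0 = ST S 1"

end

theory Submission
  imports Defs
begin


definition proj :: "('m,'s) sys \<Rightarrow> nat \<Rightarrow> 'm action list \<Rightarrow> 'm action list" where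
  "proj S i t = filter (\<lambda>act. peer_of S act = i) t"

definition onch :: "('m,'s) sys \<Rightarrow> nat \<Rightarrow> nat \<Rightarrow> 'm action \<Rightarrow> bool" where
  "onch S i j act = (src S (msg_of act) = i \<and> dst S (msg_of act) = j)"

fun chan_one :: "'m list \<Rightarrow> 'm action list \<Rightarrow> 'm list option" where
  "chan_one q [] = Some q"
| "chan_one q (Send a # t) = chan_one (q @ [a]) t"
| "chan_one q (Recv a # t) = (case q of [] \<Rightarrow> None | b # q' \<Rightarrow> if b = a then chan_one q' t else None)"

inductive lrun :: "('m,'s) sys \<Rightarrow> nat \<Rightarrow> 's \<Rightarrow> 'm action list \<Rightarrow> 's \<Rightarrow> bool" for S i where
  lnil: "lrun S i q [] q"
| lcons: "(q, act, q') \<in> trans S i \<Longrightarrow> lrun S i q' w q'' \<Longrightarrow> lrun S i q (act # w) q''"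

lemma lrun_append: "lrun S i q (w1 @ w2) q'' \<longleftrightarrow> (\<exists>q'. lrun S i q w1 q' \<and> lrun S i q' w2 q'')"
proof (induction w1 arbitrary: q)
  case Nil then show ?case by (auto intro: lnil elim: lrun.cases)
next
  case (Cons a w1)
  show ?case
  proof
    assume "lrun S i q ((a # w1) @ w2) q''"
    then obtain q1 where "(q, a, q1) \<in> trans S i" "lrun S i q1 (w1 @ w2) q''"
      by (auto elim: lrun.cases)
    then show "\<exists>q'. lrun S i q (a # w1) q' \<and> lrun S i q' w2 q''" using Cons by (auto intro: lcons)
  next
    assume "\<exists>q'. lrun S i q (a # w1) q' \<and> lrun S i q' w2 q''"
    then obtain q' q1 where "(q, a, q1) \<in> trans S i" "lrun S i q1 w1 q'" "lrun S i q' w2 q''"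
      by (auto elim: lrun.cases)
    then show "lrun S i q ((a # w1) @ w2) q''" using Cons by (auto intro: lcons)
  qed
qed

lemma lrun_Nil_iff: "lrun S i q [] q' \<longleftrightarrow> q' = q"
  by (auto intro: lnil elim: lrun.cases)

lemma lrun_Cons_iff: "lrun S i q (a # w) q'' \<longleftrightarrow> (\<exists>q'. (q, a, q') \<in> trans S i \<and> lrun S i q' w q'')"
  by (auto intro: lcons elim: lrun.cases)

lemma run_Nil_iff: "run S c [] c' \<longleftrightarrow> c' = c"
  by (auto intro: run.nil elim: run.cases)

lemma run_Cons_iff: "run S c (a # t) c'' \<longleftrightarrow> (\<exists>c'. step S c a c' \<and> run S c' t c'')"
  by (blast intro: run.cons elim: run.cases)

lemma run_append: "run S c (t1 @ t2) c'' \<longleftrightarrow> (\<exists>c'. run S c t1 c' \<and> run S c' t2 c'')"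
  by (induction t1 arbitrary: c) (auto simp: run_Nil_iff run_Cons_iff)

lemma proj_Cons: "proj S i (a # t) = (if peer_of S a = i then a # proj S i t else proj S i t)"
  by (simp add: proj_def)

lemma proj_append[simp]: "proj S i (t1 @ t2) = proj S i t1 @ proj S i t2"
  by (simp add: proj_def)

lemma onch_Send[simp]: "onch S i j (Send a) = (src S a = i \<and> dst S a = j)"
  by (simp add: onch_def msg_of_def)
lemma onch_Recv[simp]: "onch S i j (Recv a) = (src S a = i \<and> dst S a = j)"
  by (simp add: onch_def msg_of_def)
lemma msg_of_simps[simp]: "msg_of (Send a) = a" "msg_of (Recv a) = a"
  by (simp_all add: msg_of_def)
lemma peer_of_simps[simp]: "peer_of S (Send a) = src S a" "peer_of S (Recv a) = dst S a"
  by (simp_all add: peer_of_def)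

lemma product:
  "run S (q, w) t (q', w') \<longleftrightarrow>
     (\<forall>act\<in>set t. msg_of act \<in> msgs S) \<and>
     (\<forall>i j. chan_one (w i j) (filter (onch S i j) t) = Some (w' i j)) \<and>
     (\<forall>i. lrun S i (q i) (proj S i t) (q' i))"
proof (induction t arbitrary: q w)
  case Nil
  then show ?case
    by (auto simp: run_Nil_iff proj_def lrun_Nil_iff fun_eq_iff)
next
  case (Cons act t)
  show ?case (is "?L \<longleftrightarrow> ?R")
  proof (cases act)
    case (Send a)
    let ?i = "src S a" and ?j = "dst S a"
    have "run S (q, w) (act # t) (q', w') \<longleftrightarrow>
      (\<exists>p. a \<in> msgs S \<and> (q ?i, Send a, p) \<in> trans S ?i \<and>
        run S (q(?i := p), w(?i := (w ?i)(?j := w ?i ?j @ [a]))) t (q', w'))"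
      unfolding Send run_Cons_iff
      by (auto elim: step.cases intro: step.send)
    also have "\<dots> \<longleftrightarrow> (\<exists>p. a \<in> msgs S \<and> (q ?i, Send a, p) \<in> trans S ?i \<and>
        (\<forall>act\<in>set t. msg_of act \<in> msgs S) \<and>
        (\<forall>i j. chan_one ((w(?i := (w ?i)(?j := w ?i ?j @ [a]))) i j) (filter (onch S i j) t) = Some (w' i j)) \<and>
        (\<forall>i. lrun S i ((q(?i := p)) i) (proj S i t) (q' i)))"
      using Cons.IH by blast
    also have "\<dots> \<longleftrightarrow> ?R"
    proof
      assume "\<exists>p. a \<in> msgs S \<and> (q ?i, Send a, p) \<in> trans S ?i \<and>
        (\<forall>act\<in>set t. msg_of act \<in> msgs S) \<and>
        (\<forall>i j. chan_one ((w(?i := (w ?i)(?j := w ?i ?j @ [a]))) i j) (filter (onch S i j) t) = Some (w' i j)) \<and>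
        (\<forall>i. lrun S i ((q(?i := p)) i) (proj S i t) (q' i))"
      then obtain p where a: "a \<in> msgs S" "(q ?i, Send a, p) \<in> trans S ?i"
        "\<forall>act\<in>set t. msg_of act \<in> msgs S"
        "\<forall>i j. chan_one ((w(?i := (w ?i)(?j := w ?i ?j @ [a]))) i j) (filter (onch S i j) t) = Some (w' i j)"
        "\<forall>i. lrun S i ((q(?i := p)) i) (proj S i t) (q' i)" by blast
      have "\<forall>i j. chan_one (w i j) (filter (onch S i j) (act # t)) = Some (w' i j)"
      proof (intro allI)
        fix i j
        show "chan_one (w i j) (filter (onch S i j) (act # t)) = Some (w' i j)"
          using a(4)[rule_format, of i j] by (auto simp: Send  split: if_split_asm)
      qed
      moreover have "\<forall>i. lrun S i (q i) (proj S i (act # t)) (q' i)"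
      proof
        fix i
        show "lrun S i (q i) (proj S i (act # t)) (q' i)"
          using a(2) a(5)[rule_format, of i]
          by (cases "i = ?i") (auto simp: proj_Cons Send peer_of_def lrun_Cons_iff)
      qed
      ultimately show ?R using a(1,3) by (auto simp: Send msg_of_def)
    next
      assume H: ?R
      have l: "lrun S ?i (q ?i) (proj S ?i (act # t)) (q' ?i)" using H by blast
      then obtain p where p: "(q ?i, Send a, p) \<in> trans S ?i" "lrun S ?i p (proj S ?i t) (q' ?i)"
        by (auto simp: proj_Cons Send peer_of_def lrun_Cons_iff)
      have "\<forall>i. lrun S i ((q(?i := p)) i) (proj S i t) (q' i)"
      proof
        fix i
        show "lrun S i ((q(?i := p)) i) (proj S i t) (q' i)"
          using p H[THEN conjunct2, THEN conjunct2, rule_format, of i] by (cases "i = ?i") (auto simp: proj_Cons Send peer_of_def)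
      qed
      moreover have "\<forall>i j. chan_one ((w(?i := (w ?i)(?j := w ?i ?j @ [a]))) i j) (filter (onch S i j) t) = Some (w' i j)"
      proof (intro allI)
        fix i j
        show "chan_one ((w(?i := (w ?i)(?j := w ?i ?j @ [a]))) i j) (filter (onch S i j) t) = Some (w' i j)"
          using H[THEN conjunct2, THEN conjunct1, rule_format, of i j] by (auto simp: Send)
      qed
      moreover note p(1)
      moreover have "a \<in> msgs S" using H by (simp add: Send)
      moreover have "\<forall>act\<in>set t. msg_of act \<in> msgs S" using H by simp
      ultimately show "\<exists>p. a \<in> msgs S \<and> (q ?i, Send a, p) \<in> trans S ?i \<and>
        (\<forall>act\<in>set t. msg_of act \<in> msgs S) \<and>
        (\<forall>i j. chan_one ((w(?i := (w ?i)(?j := w ?i ?j @ [a]))) i j) (filter (onch S i j) t) = Some (w' i j)) \<and>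
        (\<forall>i. lrun S i ((q(?i := p)) i) (proj S i t) (q' i))"
        by blast
    qed
    finally show ?thesis .
  next
    case (Recv a)
    let ?i = "src S a" and ?j = "dst S a"
    have "run S (q, w) (act # t) (q', w') \<longleftrightarrow>
      (\<exists>p rest. a \<in> msgs S \<and> w ?i ?j = a # rest \<and> (q ?j, Recv a, p) \<in> trans S ?j \<and>
        run S (q(?j := p), w(?i := (w ?i)(?j := rest))) t (q', w'))"
      unfolding Recv run_Cons_iff
      apply (rule iffI)
       apply (elim exE conjE)
       apply (erule step.cases; simp)
       apply blast
      apply (elim exE conjE)
      apply (rule exI, rule conjI, rule step.recv, assumption+, simp_all)
      done
    also have "\<dots> \<longleftrightarrow> (\<exists>p rest. a \<in> msgs S \<and> w ?i ?j = a # rest \<and> (q ?j, Recv a, p) \<in> trans S ?j \<and>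
        (\<forall>act\<in>set t. msg_of act \<in> msgs S) \<and>
        (\<forall>i j. chan_one ((w(?i := (w ?i)(?j := rest))) i j) (filter (onch S i j) t) = Some (w' i j)) \<and>
        (\<forall>i. lrun S i ((q(?j := p)) i) (proj S i t) (q' i)))"
      using Cons.IH by blast
    also have "\<dots> \<longleftrightarrow> ?R"
    proof
      assume "\<exists>p rest. a \<in> msgs S \<and> w ?i ?j = a # rest \<and> (q ?j, Recv a, p) \<in> trans S ?j \<and>
        (\<forall>act\<in>set t. msg_of act \<in> msgs S) \<and>
        (\<forall>i j. chan_one ((w(?i := (w ?i)(?j := rest))) i j) (filter (onch S i j) t) = Some (w' i j)) \<and>
        (\<forall>i. lrun S i ((q(?j := p)) i) (proj S i t) (q' i))"
      then obtain p rest where a: "a \<in> msgs S" "w ?i ?j = a # rest" "(q ?j, Recv a, p) \<in> trans S ?j"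
        "\<forall>act\<in>set t. msg_of act \<in> msgs S"
        "\<forall>i j. chan_one ((w(?i := (w ?i)(?j := rest))) i j) (filter (onch S i j) t) = Some (w' i j)"
        "\<forall>i. lrun S i ((q(?j := p)) i) (proj S i t) (q' i)" by blast
      have "\<forall>i j. chan_one (w i j) (filter (onch S i j) (act # t)) = Some (w' i j)"
      proof (intro allI)
        fix i j
        show "chan_one (w i j) (filter (onch S i j) (act # t)) = Some (w' i j)"
          using a(5)[rule_format, of i j] a(2) by (auto simp: Recv  split: if_split_asm)
      qed
      moreover have "\<forall>i. lrun S i (q i) (proj S i (act # t)) (q' i)"
      proof
        fix i
        show "lrun S i (q i) (proj S i (act # t)) (q' i)"
          using a(3) a(6)[rule_format, of i]
          by (cases "i = ?j") (auto simp: proj_Cons Recv peer_of_def lrun_Cons_iff)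
      qed
      ultimately show ?R using a(1,4) by (auto simp: Recv msg_of_def)
    next
      assume H: ?R
      have l: "lrun S ?j (q ?j) (proj S ?j (act # t)) (q' ?j)" using H by blast
      then obtain p where p: "(q ?j, Recv a, p) \<in> trans S ?j" "lrun S ?j p (proj S ?j t) (q' ?j)"
        by (auto simp: proj_Cons Recv peer_of_def lrun_Cons_iff)
      have c: "chan_one (w ?i ?j) (filter (onch S ?i ?j) (act # t)) = Some (w' ?i ?j)" using H by blast
      then obtain rest where rest: "w ?i ?j = a # rest" "chan_one rest (filter (onch S ?i ?j) t) = Some (w' ?i ?j)"
        by (auto simp: Recv  split: list.splits if_splits)
      have "\<forall>i. lrun S i ((q(?j := p)) i) (proj S i t) (q' i)"
      proof
        fix i
        show "lrun S i ((q(?j := p)) i) (proj S i t) (q' i)"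
          using p H[THEN conjunct2, THEN conjunct2, rule_format, of i] by (cases "i = ?j") (auto simp: proj_Cons Recv peer_of_def)
      qed
      moreover have "\<forall>i j. chan_one ((w(?i := (w ?i)(?j := rest))) i j) (filter (onch S i j) t) = Some (w' i j)"
      proof (intro allI)
        fix i j
        show "chan_one ((w(?i := (w ?i)(?j := rest))) i j) (filter (onch S i j) t) = Some (w' i j)"
          using H[THEN conjunct2, THEN conjunct1, rule_format, of i j] rest by (auto simp: Recv)
      qed
      moreover note p(1) rest(1)
      moreover have "a \<in> msgs S" using H by (simp add: Recv)
      moreover have "\<forall>act\<in>set t. msg_of act \<in> msgs S" using H by simp
      ultimately show "\<exists>p rest. a \<in> msgs S \<and> w ?i ?j = a # rest \<and> (q ?j, Recv a, p) \<in> trans S ?j \<and>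
        (\<forall>act\<in>set t. msg_of act \<in> msgs S) \<and>
        (\<forall>i j. chan_one ((w(?i := (w ?i)(?j := rest))) i j) (filter (onch S i j) t) = Some (w' i j)) \<and>
        (\<forall>i. lrun S i ((q(?j := p)) i) (proj S i t) (q' i))"
        by blast
    qed
    finally show ?thesis .
  qed
qed


lemma sync_word_simps[simp]:
  "sync_word [] = []" "sync_word (m # ms) = Send m # Recv m # sync_word ms"
  "sync_word (xs @ ys) = sync_word xs @ sync_word ys"
  by (simp_all add: sync_word_def)

lemma sends_simps[simp]: "sends [] = []" "sends (Send a # t) = a # sends t" "sends (Recv a # t) = sends t"
  "sends (t1 @ t2) = sends t1 @ sends t2"
  by (simp_all add: sends_def)

lemma recvs_simps[simp]: "recvs [] = []" "recvs (Send a # t) = recvs t" "recvs (Recv a # t) = a # recvs t"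
  "recvs (t1 @ t2) = recvs t1 @ recvs t2"
  by (simp_all add: recvs_def)

lemma sends_sync[simp]: "sends (sync_word ms) = ms"
  by (induction ms) auto

lemma sends_map_Send[simp]: "sends (map Send ms) = ms"
  by (induction ms) auto

lemma synchronous_sync: "synchronous t \<Longrightarrow> t = sync_word (sends t)"
  by (auto simp: synchronous_def)

lemma T0_D: "t \<in> T S 0 \<Longrightarrow> t = sync_word (sends t) \<and> (\<exists>c. run S (c0 S) t c)"
  by (auto simp: T_def synchronous_sync)

lemma T_run: "t \<in> T S k \<Longrightarrow> \<exists>c. run S (c0 S) t c"
  by (auto simp: T_def split: if_splits)

lemma P0:
  assumes "one_synchronizable S" "t \<in> T S 1"
  shows "sync_word (sends t) \<in> T S 0"
proof -
  have "Inl (sends t) \<in> ST S 1" unfolding ST_def using assms(2) by blast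
  hence "Inl (sends t) \<in> ST S 0" using assms(1) by (simp add: one_synchronizable_def)
  then obtain t0 where "sends t = sends t0" "t0 \<in> T S 0" unfolding ST_def by blast
  then show ?thesis using T0_D[of t0 S] by simp
qed

lemma P1:
  assumes "one_synchronizable S" "t \<in> T S 1" "run S (c0 S) t c" "stable c"
  shows "run S (c0 S) (sync_word (sends t)) c"
proof -
  have "Inr (sends t, c) \<in> ST S 1" unfolding ST_def using assms(2-4) by blast
  hence "Inr (sends t, c) \<in> ST S 0" using assms(1) by (simp add: one_synchronizable_def)
  then obtain t0 where "sends t = sends t0" "t0 \<in> T S 0" "run S (c0 S) t0 c" unfolding ST_def by blast
  then show ?thesis using T0_D[of t0 S] by simp
qed

lemma filter_onch_sync:
  "filter (onch S i j) (sync_word ms) = sync_word (filter (\<lambda>m. src S m = i \<and> dst S m = j) ms)"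
  by (induction ms) auto

lemma filter_onch_map_Send:
  "filter (onch S i j) (map Send ms) = map Send (filter (\<lambda>m. src S m = i \<and> dst S m = j) ms)"
  by (induction ms) auto

lemma chan_one_map_Send: "chan_one q (map Send ys) = Some (q @ ys)"
  by (induction ys arbitrary: q) auto

lemma chan_one_sync: "chan_one [] (sync_word ms @ map Send ys) = Some ys"
  by (induction ms) (auto simp: chan_one_map_Send)

lemma sends_filter_onch:
  "sends (filter (onch S i j) t) = filter (\<lambda>a. src S a = i \<and> dst S a = j) (sends t)"
proof (induction t)
  case (Cons a t) then show ?case by (cases a) auto
qed simp

lemma recvs_filter_onch:
  "recvs (filter (onch S i j) t) = filter (\<lambda>a. src S a = i \<and> dst S a = j) (recvs t)"
proof (induction t)
  case (Cons a t) then show ?case by (cases a) auto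
qed simp

lemma prefix_singleton: "prefix p [x] \<longleftrightarrow> p = [] \<or> p = [x]"
  by (auto simp: prefix_Cons)

lemma Q_lemma:
  "prefix p (sync_word ms @ map Send ys) \<Longrightarrow> length ys \<le> 1 \<Longrightarrow>
   prefix (recvs p) (sends p) \<and> length (sends p) \<le> Suc (length (recvs p))"
proof (induction ms arbitrary: p)
  case Nil
  then have "ys = [] \<or> (\<exists>y. ys = [y])" by (cases ys) auto
  then show ?case using Nil(1) by (auto simp: prefix_singleton)
next
  case (Cons m ms)
  from Cons.prems(1) have "p = [] \<or> p = [Send m] \<or> (\<exists>p'. p = Send m # Recv m # p' \<and> prefix p' (sync_word ms @ map Send ys))"
    by (auto simp: prefix_Cons)
  then show ?case using Cons.IH Cons.prems(2) by auto
qed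

lemma kfifo1:
  assumes "\<forall>i j. \<exists>ms ys. filter (onch S i j) t = sync_word ms @ map Send ys \<and> length ys \<le> 1"
  shows "kfifo S 1 t"
  unfolding kfifo_def
proof (intro allI impI ballI)
  fix t' i j assume pf: "prefix t' t"
  obtain ms ys where e: "filter (onch S i j) t = sync_word ms @ map Send ys" "length ys \<le> 1"
    using assms by blast
  have "prefix (filter (onch S i j) t') (sync_word ms @ map Send ys)"
    using filter_mono_prefix[OF pf, of "onch S i j"] e by simp
  from Q_lemma[OF this e(2)] have
    q: "prefix (recv_on S i j t') (sent_on S i j t')" "length (sent_on S i j t') \<le> Suc (length (recv_on S i j t'))"
    by (simp_all add: sent_on_def recv_on_def sends_filter_onch recvs_filter_onch)
  show "\<exists>w. buf S i j t' = Some w \<and> length w \<le> 1"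
    using q by (simp add: buf_def)
qed

lemma MK:
  assumes "\<forall>act\<in>set t. msg_of act \<in> msgs S"
    "\<forall>i j. \<exists>ms ys. filter (onch S i j) t = sync_word ms @ map Send ys"
    "\<forall>i. lrun S i (init S i) (proj S i t) (q' i)"
  shows "run S (c0 S) t (q', \<lambda>i j. the (chan_one [] (filter (onch S i j) t)))"
proof -
  have "\<forall>i j. chan_one [] (filter (onch S i j) t) = Some (the (chan_one [] (filter (onch S i j) t)))"
  proof (intro allI)
    fix i j
    obtain ms ys where "filter (onch S i j) t = sync_word ms @ map Send ys" using assms(2) by blast
    then show "chan_one [] (filter (onch S i j) t) = Some (the (chan_one [] (filter (onch S i j) t)))"
      by (simp add: chan_one_sync)
  qed
  then show ?thesis using assms(1,3) unfolding c0_def product by simp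
qed

lemma MK_stable:
  assumes "\<forall>act\<in>set t. msg_of act \<in> msgs S"
    "\<forall>i j. \<exists>ms. filter (onch S i j) t = sync_word ms"
    "\<forall>i. lrun S i (init S i) (proj S i t) (q' i)"
  shows "run S (c0 S) t (q', \<lambda>i j. [])" "t \<in> T S 1"
proof -
  have e: "\<forall>i j. \<exists>ms ys. filter (onch S i j) t = sync_word ms @ map Send ys \<and> length ys \<le> 1"
    using assms(2) by (metis append_Nil2 list.simps(8) list.size(3) zero_le)
  have r: "run S (c0 S) t (q', \<lambda>i j. the (chan_one [] (filter (onch S i j) t)))"
    using MK[OF assms(1) _ assms(3)] e by blast
  have "(\<lambda>i j. the (chan_one [] (filter (onch S i j) t))) = (\<lambda>i j. [])"
  proof (intro ext)
    fix i j
    obtain ms where "filter (onch S i j) t = sync_word ms" using assms(2) by blast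
    then show "the (chan_one [] (filter (onch S i j) t)) = []" using chan_one_sync[of ms "[]"] by simp
  qed
  with r show "run S (c0 S) t (q', \<lambda>i j. [])" by simp
  show "t \<in> T S 1" using r kfifo1[OF e] by (auto simp: T_def)
qed

lemma MK_T1:
  assumes "\<forall>act\<in>set t. msg_of act \<in> msgs S"
    "\<forall>i j. \<exists>ms ys. filter (onch S i j) t = sync_word ms @ map Send ys \<and> length ys \<le> 1"
    "\<forall>i. \<exists>st. lrun S i (init S i) (proj S i t) st"
  shows "t \<in> T S 1"
proof -
  obtain q' where "\<forall>i. lrun S i (init S i) (proj S i t) (q' i)" using assms(3) by metis
  then have "run S (c0 S) t (q', \<lambda>i j. the (chan_one [] (filter (onch S i j) t)))"
    using MK[OF assms(1)] assms(2) by blast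
  then show ?thesis using kfifo1[OF assms(2)] by (auto simp: T_def)
qed

lemma run_locals: "run S (c0 S) t (q', w') \<Longrightarrow> \<forall>i. lrun S i (init S i) (proj S i t) (q' i)"
  by (simp add: c0_def product)

lemma run_msgs: "run S c t c' \<Longrightarrow> \<forall>act\<in>set t. msg_of act \<in> msgs S"
  by (cases c; cases c') (simp add: product)

lemma Ex_locals: "\<exists>c. run S (c0 S) t c \<Longrightarrow> \<forall>i. \<exists>st. lrun S i (init S i) (proj S i t) st"
  by (metis run_locals surj_pair)


definition exe :: "('m,'s) sys \<Rightarrow> 'm action list \<Rightarrow> bool" where
  "exe S t \<longleftrightarrow> (\<exists>c. run S (c0 S) t c)"

lemma exe_prefix: "exe S (t1 @ t2) \<Longrightarrow> exe S t1"
  by (auto simp: exe_def run_append)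

lemma lrun_prefix: "lrun S i q (w1 @ w2) q'' \<Longrightarrow> \<exists>q'. lrun S i q w1 q'"
  by (auto simp: lrun_append)

lemma exe_locals: "exe S t \<Longrightarrow> \<exists>st. lrun S i (init S i) (proj S i t) st"
  using Ex_locals[of S t] by (auto simp: exe_def)

lemma exe_msgs: "exe S t \<Longrightarrow> \<forall>act\<in>set t. msg_of act \<in> msgs S"
  by (auto simp: exe_def dest: run_msgs)

lemma T1_exe: "t \<in> T S k \<Longrightarrow> exe S t"
  unfolding exe_def by (rule T_run)

lemma proj_Nil[simp]: "proj S i [] = []"
  by (simp add: proj_def)

lemma proj_map_Send: "proj S i (map Send ms) = map Send (filter (\<lambda>m. src S m = i) ms)"
  by (induction ms) (auto simp: proj_Cons)

lemma proj_sync_sender: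
  "\<forall>p\<in>set ps. src S p = i \<and> dst S p \<noteq> i \<Longrightarrow> proj S i (sync_word ps) = map Send ps"
  by (induction ps) (auto simp: proj_Cons)

lemma proj_sync_Cons: "proj S i (sync_word (m # ms)) = proj S i [Send m, Recv m] @ proj S i (sync_word ms)"
  by (simp add: proj_def)

lemma wf_msg: "wf_sys S \<Longrightarrow> a \<in> msgs S \<Longrightarrow> src S a \<noteq> dst S a"
  by (auto simp: wf_sys_def)

lemma set_sync: "set (sync_word ms) = Send ` set ms \<union> Recv ` set ms"
  by (induction ms) auto

lemma msgs_sync: "(\<forall>act\<in>set (sync_word ms). msg_of act \<in> msgs S) \<longleftrightarrow> set ms \<subseteq> msgs S"
  by (induction ms) auto

lemma msgs_map_Send: "(\<forall>act\<in>set (map Send ms). msg_of act \<in> msgs S) \<longleftrightarrow> set ms \<subseteq> msgs S"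
  by (induction ms) auto

lemma U_lemma:
  assumes wf: "wf_sys S" and os: "one_synchronizable S" and tau: "tau \<in> T S 0"
  shows "exe S (tau @ map Send s) \<Longrightarrow> exe S (tau @ sync_word s)"
proof (induction s rule: rev_induct)
  case Nil
  then show ?case by simp
next
  case (snoc x s')
  define s where "s = s' @ [x]"
  define P where "P = src S x"
  obtain ts where ts: "tau = sync_word ts" using T0_D[OF tau] by blast
  have H: "exe S (tau @ map Send s)" using snoc.prems s_def by simp
  have m: "\<forall>act\<in>set (sync_word ts). msg_of act \<in> msgs S" "\<forall>act\<in>set (map Send s). msg_of act \<in> msgs S"
    using exe_msgs[OF H] ts by auto
  have msgs_s: "set s \<subseteq> msgs S" "set ts \<subseteq> msgs S"
    using m unfolding msgs_sync msgs_map_Send by auto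
  have IH: "exe S (tau @ sync_word s')"
    using snoc.IH snoc.prems exe_prefix[of S "tau @ map Send s'" "[Send x]"] by simp
  have pre: "exe S (tau @ sync_word (take k s'))" for k
    using exe_prefix[of S "tau @ sync_word (take k s')" "sync_word (drop k s')"] IH
    by (metis append.assoc append_take_drop_id sync_word_simps(3))
  have Z: "r \<le> length s' \<Longrightarrow> \<exists>st. lrun S P (init S P)
     (proj S P (tau @ sync_word (take r s')) @ map Send (filter (\<lambda>m. src S m = P) (drop r s))) st" for r
  proof (induction r)
    case 0
    show ?case using exe_locals[OF H, of P] by (simp add: proj_map_Send)
  next
    case (Suc r)
    then have rl: "r < length s'" by simp
    define y where "y = s' ! r"
    have tk: "take (Suc r) s' = take r s' @ [y]" using rl y_def by (simp add: take_Suc_conv_app_nth)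
    have dr: "drop r s = y # drop (Suc r) s" using rl y_def s_def
      by (simp add: Cons_nth_drop_Suc nth_append)
    have ys: "y \<in> set s" using rl y_def s_def by simp
    have ymsg: "y \<in> msgs S" using ys msgs_s by auto
    have IHr: "\<exists>st. lrun S P (init S P)
     (proj S P (tau @ sync_word (take r s')) @ map Send (filter (\<lambda>m. src S m = P) (drop r s))) st"
      using Suc by simp
    show ?case
    proof (cases "dst S y = P")
      case False
      then show ?thesis using IHr by (cases "src S y = P") (simp_all add: tk dr proj_Cons)
    next
      case True
      have sy: "src S y \<noteq> P" using True wf_msg[OF wf ymsg] by simp
      define ps where "ps = filter (\<lambda>m. src S m = P) (drop (Suc r) s)"
      have psP: "\<forall>p\<in>set ps. src S p = P \<and> dst S p \<noteq> P \<and> p \<in> msgs S"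
        using msgs_s wf_msg[OF wf] unfolding ps_def by (fastforce dest: in_set_dropD)
      have fdr: "filter (\<lambda>m. src S m = P) (drop r s) = ps" using dr sy ps_def by simp
      have chain: "q \<le> length ps \<Longrightarrow> exe S (tau @ sync_word (take (Suc r) s') @ sync_word (take q ps))" for q
      proof (induction q)
        case 0
        then show ?case using pre by simp
      next
        case (Suc q)
        then have ql: "q < length ps" by simp
        define p where "p = ps ! q"
        have tq: "take (Suc q) ps = take q ps @ [p]" using ql p_def by (simp add: take_Suc_conv_app_nth)
        have pP: "src S p = P" "dst S p \<noteq> P" "p \<in> msgs S" using psP ql p_def by auto
        have IHq: "exe S (tau @ sync_word (take (Suc r) s') @ sync_word (take q ps))"
          using Suc ql by simp
        define t where "t = tau @ sync_word (take r s') @ [Send y] @ sync_word (take q ps) @ [Send p]"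
        have tmsg: "\<forall>act\<in>set t. msg_of act \<in> msgs S"
        proof -
          have "set (take r s') \<subseteq> msgs S" using msgs_s s_def by (auto dest: in_set_takeD)
          moreover have "set (take q ps) \<subseteq> msgs S" using psP by (auto dest: in_set_takeD)
          ultimately show ?thesis using msgs_s ymsg pP unfolding t_def ts
            by (auto simp: set_sync)
        qed
        have tch: "\<forall>i j. \<exists>ms ys. filter (onch S i j) t = sync_word ms @ map Send ys \<and> length ys \<le> 1"
        proof (intro allI)
          fix i j
          let ?F = "filter (\<lambda>m. src S m = i \<and> dst S m = j)"
          show "\<exists>ms ys. filter (onch S i j) t = sync_word ms @ map Send ys \<and> length ys \<le> 1"
          proof (cases "src S y = i \<and> dst S y = j")
            case True
            have "?F (take q ps) = []" using psP True sy by (auto simp: filter_empty_conv dest: in_set_takeD)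
            then have "filter (onch S i j) t = sync_word (?F ts @ ?F (take r s')) @ map Send [y]"
              using True sy pP unfolding t_def ts by (simp add: filter_onch_sync)
            then show ?thesis by (intro exI[of _ "?F ts @ ?F (take r s')"] exI[of _ "[y]"]) simp
          next
            case False
            then have "filter (onch S i j) t = sync_word (?F ts @ ?F (take r s') @ ?F (take q ps)) @ map Send (?F [p])"
              unfolding t_def ts by (simp add: filter_onch_sync)
            then show ?thesis by (intro exI[of _ "?F ts @ ?F (take r s') @ ?F (take q ps)"] exI[of _ "?F [p]"]) simp
          qed
        qed
        have tloc: "\<forall>i. \<exists>st. lrun S i (init S i) (proj S i t) st"
        proof
          fix i
          show "\<exists>st. lrun S i (init S i) (proj S i t) st"
          proof (cases "i = P")
            case False
            have "proj S i t = proj S i (tau @ sync_word (take (Suc r) s') @ sync_word (take q ps))"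
              using False True pP unfolding t_def tk by (simp add: proj_Cons)
            then show ?thesis using exe_locals[OF IHq, of i] by simp
          next
            case iP: True
            have pq: "proj S P (sync_word (take q ps)) = map Send (take q ps)"
              using psP by (intro proj_sync_sender) (auto dest: in_set_takeD)
            have "proj S i t = proj S P (tau @ sync_word (take r s')) @ map Send (take (Suc q) ps)"
              using iP sy pP pq unfolding t_def tq by (simp add: proj_Cons)
            moreover have "ps = take (Suc q) ps @ drop (Suc q) ps" by simp
            ultimately show ?thesis using IHr fdr iP
              by (metis append.assoc lrun_prefix map_append)
          qed
        qed
        have "t \<in> T S 1" using MK_T1[OF tmsg tch tloc] .
        from P0[OF os this] have "exe S (sync_word (sends t))" by (rule T1_exe)
        moreover have "sync_word (sends t) = tau @ sync_word (take (Suc r) s') @ sync_word (take (Suc q) ps)"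
          unfolding t_def tk tq by (simp add: ts)
        ultimately show ?case by simp
      qed
      from chain[of "length ps"] have "exe S (tau @ sync_word (take (Suc r) s') @ sync_word ps)" by simp
      from exe_locals[OF this, of P] obtain st where
        "lrun S P (init S P) (proj S P (tau @ sync_word (take (Suc r) s') @ sync_word ps)) st" by blast
      moreover have "proj S P (sync_word ps) = map Send ps" using psP by (intro proj_sync_sender) auto
      ultimately show ?thesis unfolding ps_def by auto
    qed
  qed
  from Z[of "length s'"] obtain st where
    stP: "lrun S P (init S P) (proj S P (tau @ sync_word s') @ [Send x]) st"
    by (auto simp: s_def P_def)
  define t where "t = tau @ sync_word s' @ [Send x]"
  have tmsg: "\<forall>act\<in>set t. msg_of act \<in> msgs S"
    using msgs_s unfolding t_def ts s_def by (auto simp: set_sync)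
  have tch: "\<forall>i j. \<exists>ms ys. filter (onch S i j) t = sync_word ms @ map Send ys \<and> length ys \<le> 1"
  proof (intro allI)
    fix i j
    let ?F = "filter (\<lambda>m. src S m = i \<and> dst S m = j)"
    have "filter (onch S i j) t = sync_word (?F ts @ ?F s') @ map Send (?F [x])"
      unfolding t_def ts by (simp add: filter_onch_sync)
    then show "\<exists>ms ys. filter (onch S i j) t = sync_word ms @ map Send ys \<and> length ys \<le> 1"
      by (intro exI[of _ "?F ts @ ?F s'"] exI[of _ "?F [x]"]) simp
  qed
  have tloc: "\<forall>i. \<exists>st. lrun S i (init S i) (proj S i t) st"
  proof
    fix i
    show "\<exists>st. lrun S i (init S i) (proj S i t) st"
    proof (cases "i = P")
      case True
      then show ?thesis using stP unfolding t_def P_def by (auto simp: proj_Cons)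
    next
      case False
      then have "proj S i t = proj S i (tau @ sync_word s')" unfolding t_def P_def by (simp add: proj_Cons)
      then show ?thesis using exe_locals[OF IH, of i] by simp
    qed
  qed
  have "t \<in> T S 1" using MK_T1[OF tmsg tch tloc] .
  from P0[OF os this] have "exe S (sync_word (sends t))" by (rule T1_exe)
  then show ?case unfolding t_def by (simp add: ts)
qed



lemma sh_iff:
  assumes "set xs \<inter> set ys = {}"
  shows "z \<in> shuffles xs ys \<longleftrightarrow> filter (\<lambda>m. m \<in> set xs) z = xs \<and> filter (\<lambda>m. m \<notin> set xs) z = ys"
  using filter_shuffles_disjoint1[OF assms] partition_in_shuffles[of z "\<lambda>m. m \<in> set xs"] by metis

lemma proj_sync_concat: "proj S i (sync_word s) = concat (map (\<lambda>m. proj S i [Send m, Recv m]) s)"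
  by (induction s) (auto simp: proj_def)

lemma realize:
  "(\<forall>m \<in> set xs \<union> set ys. length (e m) \<le> 1) \<Longrightarrow>
   w \<in> shuffles (concat (map e xs)) (concat (map e ys)) \<Longrightarrow>
   \<exists>s\<in>shuffles xs ys. concat (map e s) = w"
proof (induction xs ys arbitrary: w rule: shuffles.induct)
  case (1 ys)
  then show ?case by auto
next
  case (2 x xs)
  then show ?case by auto
next
  case (3 x xs y ys)
  show ?case
  proof (cases "e x = []")
    case True
    then have "w \<in> shuffles (concat (map e xs)) (concat (map e (y # ys)))" using "3.prems" by simp
    from "3.IH"(1)[OF _ this] "3.prems"(1) obtain s where "s \<in> shuffles xs (y # ys)" "concat (map e s) = w"
      by auto
    then show ?thesis using True by (intro bexI[of _ "x # s"]) (auto intro: Cons_in_shuffles_leftI)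
  next
    case ex: False
    show ?thesis
    proof (cases "e y = []")
      case True
      then have "w \<in> shuffles (concat (map e (x # xs))) (concat (map e ys))" using "3.prems" by simp
      from "3.IH"(2)[OF _ this] "3.prems"(1) obtain s where "s \<in> shuffles (x # xs) ys" "concat (map e s) = w"
        by auto
      then show ?thesis using True by (intro bexI[of _ "y # s"]) (auto intro: Cons_in_shuffles_rightI)
    next
      case False
      obtain u where u: "e x = [u]" using ex "3.prems"(1) by (cases "e x") auto
      obtain v where v: "e y = [v]" using False "3.prems"(1) by (cases "e y") auto
      have w: "w \<in> shuffles (u # concat (map e xs)) (v # concat (map e ys))" using "3.prems"(2) u v by simp
      then obtain c w' where cw: "w = c # w'" by (cases w) auto
      from w have "(c = u \<and> w' \<in> shuffles (concat (map e xs)) (v # concat (map e ys))) \<or>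
                      (c = v \<and> w' \<in> shuffles (u # concat (map e xs)) (concat (map e ys)))"
        unfolding cw Cons_in_shuffles_iff by auto
      then show ?thesis
      proof
        assume "c = u \<and> w' \<in> shuffles (concat (map e xs)) (v # concat (map e ys))"
        then have "c = u" "w' \<in> shuffles (concat (map e xs)) (concat (map e (y # ys)))" using v by auto
        from "3.IH"(1)[OF _ this(2)] "3.prems"(1) obtain s where "s \<in> shuffles xs (y # ys)" "concat (map e s) = w'"
          by auto
        then show ?thesis using u cw \<open>c = u\<close> by (intro bexI[of _ "x # s"]) (auto intro: Cons_in_shuffles_leftI)
      next
        assume "c = v \<and> w' \<in> shuffles (u # concat (map e xs)) (concat (map e ys))"
        then have "c = v" "w' \<in> shuffles (concat (map e (x # xs))) (concat (map e ys))" using u by auto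
        from "3.IH"(2)[OF _ this(2)] "3.prems"(1) obtain s where "s \<in> shuffles (x # xs) ys" "concat (map e s) = w'"
          by auto
        then show ?thesis using v cw \<open>c = v\<close> by (intro bexI[of _ "y # s"]) (auto intro: Cons_in_shuffles_rightI)
      qed
    qed
  qed
qed

lemma append_in_shuffles: "xs @ ys \<in> shuffles xs ys"
  by (induction xs) (auto intro: Cons_in_shuffles_leftI)

locale ctx =
  fixes S :: "('m, 's) sys" and tau :: "'m action list" and as bs :: "'m list"
  assumes wf: "wf_sys S" and os: "one_synchronizable S" and tau: "tau \<in> T S 0"
    and ea: "exe S (tau @ map Send as)" and eb: "exe S (tau @ map Send bs)"
    and disj: "\<forall>a\<in>set as. \<forall>b\<in>set bs. src S a \<noteq> src S b"
begin

lemma disj_sets: "set as \<inter> set bs = {}"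
  using disj by auto

lemma msgs_ab: "set as \<subseteq> msgs S" "set bs \<subseteq> msgs S"
proof -
  have "\<forall>act\<in>set (map Send as). msg_of act \<in> msgs S" "\<forall>act\<in>set (map Send bs). msg_of act \<in> msgs S"
    using exe_msgs[OF ea] exe_msgs[OF eb] by auto
  then show "set as \<subseteq> msgs S" "set bs \<subseteq> msgs S" unfolding msgs_map_Send by auto
qed

lemma tau_sync: "tau = sync_word (sends tau)"
  using T0_D[OF tau] by blast

lemma good: assumes "z \<in> shuffles as bs" shows "exe S (tau @ map Send z)"
proof -
  let ?t = "tau @ map Send z"
  have sz: "set z = set as \<union> set bs" using set_shuffles[OF assms] .
  have m: "\<forall>act\<in>set ?t. msg_of act \<in> msgs S"
    using exe_msgs[OF ea] msgs_ab sz by auto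
  have ch: "\<forall>i j. \<exists>ms ys. filter (onch S i j) ?t = sync_word ms @ map Send ys"
  proof (intro allI)
    fix i j
    show "\<exists>ms ys. filter (onch S i j) ?t = sync_word ms @ map Send ys"
      by (subst tau_sync) (auto simp: filter_onch_sync filter_onch_map_Send)
  qed
  have "\<forall>i. \<exists>st. lrun S i (init S i) (proj S i ?t) st"
  proof
    fix i
    have fz: "filter (\<lambda>m. src S m = i) z \<in> shuffles (filter (\<lambda>m. src S m = i) as) (filter (\<lambda>m. src S m = i) bs)"
      using assms filter_shuffles[of "\<lambda>m. src S m = i" as bs] by blast
    show "\<exists>st. lrun S i (init S i) (proj S i ?t) st"
    proof (cases "filter (\<lambda>m. src S m = i) bs = []")
      case True
      then have "filter (\<lambda>m. src S m = i) z = filter (\<lambda>m. src S m = i) as" using fz by simp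
      then show ?thesis using exe_locals[OF ea, of i] by (simp add: proj_map_Send)
    next
      case False
      then have "filter (\<lambda>m. src S m = i) as = []" using disj by (auto simp: filter_empty_conv)
      then have "filter (\<lambda>m. src S m = i) z = filter (\<lambda>m. src S m = i) bs" using fz by simp
      then show ?thesis using exe_locals[OF eb, of i] by (simp add: proj_map_Send)
    qed
  qed
  then obtain q' where "\<forall>i. lrun S i (init S i) (proj S i ?t) (q' i)" by metis
  from MK[OF m ch this] show ?thesis by (auto simp: exe_def)
qed

lemma blk: "z \<in> shuffles as bs \<Longrightarrow> exe S (tau @ sync_word z)"
  using U_lemma[OF wf os tau good] by blast

definition Lb :: "nat \<Rightarrow> 'm list \<Rightarrow> 's set" where
  "Lb i s = {st. lrun S i (init S i) (proj S i (tau @ sync_word s)) st}"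

lemma move:
  assumes i: "\<forall>b\<in>set bs. src S b \<noteq> i"
    and sh: "s1 @ [b, a] @ s2 \<in> shuffles as bs" and a: "a \<in> set as" and b: "b \<in> set bs"
  shows "Lb i (s1 @ [a, b] @ s2) \<subseteq> Lb i (s1 @ [b, a] @ s2)"
proof (cases "dst S b = i")
  case False
  then show ?thesis using i b by (auto simp: Lb_def proj_Cons)
next
  case True
  have sab: "src S a \<noteq> src S b" using disj a b by blast
  have sbi: "src S b \<noteq> i" using i b by blast
  show ?thesis
  proof
    fix st assume st: "st \<in> Lb i (s1 @ [a, b] @ s2)"
    obtain c where "run S (c0 S) (tau @ sync_word (s1 @ [b, a] @ s2)) c" using blk[OF sh] by (auto simp: exe_def)
    then obtain qb wb where rb: "run S (c0 S) (tau @ sync_word (s1 @ [b, a] @ s2)) (qb, wb)" by (cases c) auto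
    define t where "t = tau @ sync_word s1 @ [Send b, Send a, Recv a, Recv b] @ sync_word s2"
    define q' where "q' = qb(i := st)"
    have tm: "\<forall>act\<in>set t. msg_of act \<in> msgs S"
      using run_msgs[OF rb] unfolding t_def by (auto simp: set_sync)
    have tc: "\<forall>i j. \<exists>ms. filter (onch S i j) t = sync_word ms"
    proof (intro allI)
      fix i j
      let ?F = "filter (\<lambda>m. src S m = i \<and> dst S m = j)"
      have "filter (onch S i j) t = sync_word (?F (sends tau) @ ?F s1 @ ?F [b, a] @ ?F s2)"
        unfolding t_def using sab by (subst tau_sync) (auto simp: filter_onch_sync)
      then show "\<exists>ms. filter (onch S i j) t = sync_word ms" by blast
    qed
    have tl: "\<forall>j. lrun S j (init S j) (proj S j t) (q' j)"
    proof
      fix j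
      show "lrun S j (init S j) (proj S j t) (q' j)"
      proof (cases "j = i")
        case True
        then show ?thesis using st sbi \<open>dst S b = i\<close> unfolding t_def q'_def Lb_def
          by (auto simp: proj_Cons)
      next
        case False
        then have "proj S j t = proj S j (tau @ sync_word (s1 @ [b, a] @ s2))"
          using \<open>dst S b = i\<close> unfolding t_def by (auto simp: proj_Cons)
        then show ?thesis using run_locals[OF rb] False unfolding q'_def by simp
      qed
    qed
    from MK_stable[OF tm tc tl] have r: "run S (c0 S) t (q', \<lambda>i j. [])" "t \<in> T S 1" by auto
    have "run S (c0 S) (sync_word (sends t)) (q', \<lambda>i j. [])"
      using P1[OF os r(2) r(1)] by (simp add: stable_def)
    moreover have "sync_word (sends t) = tau @ sync_word (s1 @ [b, a] @ s2)"
      unfolding t_def by (subst (2) tau_sync) simp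
    ultimately have "lrun S i (init S i) (proj S i (tau @ sync_word (s1 @ [b, a] @ s2))) (q' i)"
      using run_locals by metis
    then show "st \<in> Lb i (s1 @ [b, a] @ s2)" by (simp add: Lb_def q'_def)
  qed
qed

lemma chain:
  assumes i: "\<forall>b\<in>set bs. src S b \<noteq> i"
  shows "(\<forall>x\<in>set X. x \<in> set as) \<Longrightarrow> m \<notin> set as \<Longrightarrow> u @ X @ [m] @ V \<in> shuffles as bs \<Longrightarrow>
    Lb i (u @ X @ [m] @ V) \<subseteq> Lb i (u @ [m] @ X @ V)"
proof (induction X arbitrary: u)
  case Nil
  then show ?case by simp
next
  case (Cons x X)
  have mb: "m \<in> set bs" using Cons.prems set_shuffles[OF Cons.prems(3)] by auto
  have xa: "x \<in> set as" using Cons.prems by simp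
  have "Lb i (u @ (x # X) @ [m] @ V) \<subseteq> Lb i ((u @ [x]) @ [m] @ X @ V)"
    using Cons.IH[of "u @ [x]"] Cons.prems by simp
  also have "\<dots> = Lb i (u @ [x, m] @ X @ V)" by simp
  also have "\<dots> \<subseteq> Lb i (u @ [m, x] @ X @ V)"
  proof (rule move[OF i _ xa mb])
    have "filter (\<lambda>m. m \<in> set as) (u @ (x # X) @ [m] @ V) = as"
         "filter (\<lambda>m. m \<notin> set as) (u @ (x # X) @ [m] @ V) = bs"
      using Cons.prems(3) sh_iff[OF disj_sets] by blast+
    then have "filter (\<lambda>m. m \<in> set as) (u @ [m, x] @ X @ V) = as"
         "filter (\<lambda>m. m \<notin> set as) (u @ [m, x] @ X @ V) = bs"
      using Cons.prems(1,2) by auto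
    then show "u @ [m, x] @ X @ V \<in> shuffles as bs" using sh_iff[OF disj_sets] by blast
  qed
  finally show ?case by simp
qed

lemma bubble:
  assumes i: "\<forall>b\<in>set bs. src S b \<noteq> i"
  shows "u @ s \<in> shuffles as bs \<Longrightarrow>
    Lb i (u @ filter (\<lambda>m. m \<in> set as) s @ filter (\<lambda>m. m \<notin> set as) s) \<subseteq> Lb i (u @ s)"
proof (induction s arbitrary: u)
  case Nil
  then show ?case by simp
next
  case (Cons m s)
  show ?case
  proof (cases "m \<in> set as")
    case True
    then show ?thesis using Cons.IH[of "u @ [m]"] Cons.prems by simp
  next
    case False
    let ?X = "filter (\<lambda>m. m \<in> set as) s" and ?V = "filter (\<lambda>m. m \<notin> set as) s"
    have f: "filter (\<lambda>m. m \<in> set as) (u @ m # s) = as" "filter (\<lambda>m. m \<notin> set as) (u @ m # s) = bs"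
      using Cons.prems sh_iff[OF disj_sets] by blast+
    have "u @ ?X @ [m] @ ?V \<in> shuffles as bs"
      using f False sh_iff[OF disj_sets] by auto
    then have "Lb i (u @ ?X @ [m] @ ?V) \<subseteq> Lb i (u @ [m] @ ?X @ ?V)"
      using chain[OF i, of ?X m u ?V] False by auto
    also have "\<dots> \<subseteq> Lb i (u @ [m] @ s)"
      using Cons.IH[of "u @ [m]"] Cons.prems by simp
    finally show ?thesis using False by simp
  qed
qed

lemma min_sub:
  assumes i: "\<forall>b\<in>set bs. src S b \<noteq> i" and s: "s \<in> shuffles as bs"
  shows "Lb i (as @ bs) \<subseteq> Lb i s"
  using bubble[OF i, of "[]" s] s filter_shuffles_disjoint1[OF disj_sets s] by simp

lemma final_peer:
  assumes i: "\<forall>b\<in>set bs. src S b \<noteq> i" and xi: "xi \<in> shuffles (sync_word as) (sync_word bs)"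
  shows "Lb i (as @ bs) \<subseteq> {st. lrun S i (init S i) (proj S i (tau @ xi)) st}"
proof -
  let ?e = "\<lambda>m. proj S i [Send m, Recv m]"
  have "proj S i xi \<in> shuffles (proj S i (sync_word as)) (proj S i (sync_word bs))"
    using xi filter_shuffles[of "\<lambda>act. peer_of S act = i" "sync_word as" "sync_word bs"]
    unfolding proj_def by blast
  then have w: "proj S i xi \<in> shuffles (concat (map ?e as)) (concat (map ?e bs))"
    by (simp add: proj_sync_concat)
  have "\<forall>m\<in>set as \<union> set bs. length (?e m) \<le> 1"
    using msgs_ab wf_msg[OF wf] by (auto simp: proj_Cons)
  from realize[OF this w] obtain s where s: "s \<in> shuffles as bs" "concat (map ?e s) = proj S i xi"
    by blast
  have "proj S i (tau @ xi) = proj S i (tau @ sync_word s)"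
    using s(2) by (simp add: proj_sync_concat)
  then show ?thesis using min_sub[OF i s(1)] by (simp add: Lb_def)
qed

end



theorem lemma4p9:
  fixes S :: "('m, 's) sys" and as bs :: "'m list" and tau xi1 xi2 :: "'m action list"
  assumes "wf_sys S"
    and "one_synchronizable S"
    and "set as \<subseteq> msgs S" and "set bs \<subseteq> msgs S"
    and "tau \<in> T S 0"
    and "tau @ map Send as \<in> T S (length as)"
    and "tau @ map Send bs \<in> T S (length bs)"
    and "\<forall>a\<in>set as. \<forall>b\<in>set bs. src S a \<noteq> src S b"
    and "xi1 \<in> shuffles (sync_word as) (sync_word bs)"
    and "xi2 \<in> shuffles (sync_word as) (sync_word bs)"
    and "xi1 \<noteq> xi2"
  shows "tau @ xi1 \<in> T_omega S \<and> tau @ xi2 \<in> T_omega S \<and> trace_equiv S (tau @ xi1) (tau @ xi2)"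
proof -
  have ea: "exe S (tau @ map Send as)" using assms(6) by (rule T1_exe)
  have eb: "exe S (tau @ map Send bs)" using assms(7) by (rule T1_exe)
  interpret c1: ctx S tau as bs
    using assms(1,2,5,8) ea eb by unfold_locales auto
  interpret c2: ctx S tau bs as
    using assms(1,2,5,8) ea eb by unfold_locales metis+
  define mn where "mn i = (if \<forall>b\<in>set bs. src S b \<noteq> i then c1.Lb i (as @ bs) else c2.Lb i (bs @ as))" for i
  have "\<forall>i. \<exists>st. st \<in> mn i"
  proof
    fix i
    show "\<exists>st. st \<in> mn i"
    proof (cases "\<forall>b\<in>set bs. src S b \<noteq> i")
      case True
      then show ?thesis using exe_locals[OF c1.blk[OF append_in_shuffles], of i]
        by (simp add: mn_def c1.Lb_def)
    next
      case False
      then show ?thesis using exe_locals[OF c2.blk[OF append_in_shuffles], of i]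
        by (auto simp: mn_def c2.Lb_def)
    qed
  qed
  then obtain q where q: "\<forall>i. q i \<in> mn i" by metis
  have key: "run S (c0 S) (tau @ xi) (q, \<lambda>i j. []) \<and> tau @ xi \<in> T S 1"
    if xi: "xi \<in> shuffles (sync_word as) (sync_word bs)" for xi
  proof -
    have tm: "\<forall>act\<in>set tau. msg_of act \<in> msgs S" using exe_msgs[OF ea] by auto
    have m: "\<forall>act\<in>set (tau @ xi). msg_of act \<in> msgs S"
      using tm set_shuffles[OF xi] c1.msgs_ab by (auto simp: set_sync)
    have ch: "\<forall>i j. \<exists>ms. filter (onch S i j) (tau @ xi) = sync_word ms"
    proof (intro allI)
      fix i j
      let ?F = "filter (\<lambda>m. src S m = i \<and> dst S m = j)"
      have "filter (onch S i j) xi \<in> shuffles (sync_word (?F as)) (sync_word (?F bs))"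
        using xi filter_shuffles[of "onch S i j" "sync_word as" "sync_word bs"]
        by (auto simp: filter_onch_sync)
      moreover have "?F as = [] \<or> ?F bs = []"
        using assms(8) by (auto simp: filter_empty_conv)
      ultimately have "\<exists>ms. filter (onch S i j) xi = sync_word ms" by auto
      then obtain ms where "filter (onch S i j) xi = sync_word ms" by blast
      then have "filter (onch S i j) (tau @ xi) = sync_word (?F (sends tau) @ ms)"
        by (subst c1.tau_sync) (simp add: filter_onch_sync)
      then show "\<exists>ms. filter (onch S i j) (tau @ xi) = sync_word ms" by blast
    qed
    have l: "\<forall>i. lrun S i (init S i) (proj S i (tau @ xi)) (q i)"
    proof
      fix i
      show "lrun S i (init S i) (proj S i (tau @ xi)) (q i)"
      proof (cases "\<forall>b\<in>set bs. src S b \<noteq> i")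
        case True
        then show ?thesis using c1.final_peer[OF True xi] q[rule_format, of i] by (auto simp: mn_def)
      next
        case False
        then have i2: "\<forall>a\<in>set as. src S a \<noteq> i" using assms(8) by auto
        have xi2: "xi \<in> shuffles (sync_word bs) (sync_word as)" using xi by (simp add: shuffles_commutes)
        show ?thesis using c2.final_peer[OF i2 xi2] q[rule_format, of i] False by (auto simp: mn_def)
      qed
    qed
    show ?thesis using MK_stable[OF m ch l] by blast
  qed
  have "T S 1 \<subseteq> T_omega S" unfolding T_omega_def by blast
  then show ?thesis using key[OF assms(9)] key[OF assms(10)]
    by (auto simp: trace_equiv_def)
qed

end
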